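(* For all positive integers $\mu$, $\vec H_{0,1}(\mu)=\binom{2\mu}{\mu}\frac{1}{2\mu(2\mu-1)}$. Moreover $\frac{\partial}{\partial x}F_{0,1}(x)=z(x)$, where $z(x)=\frac{1-\sqrt{1-4x}}{2x}$ is the power series with $z(0)=1$ satisfying $x=\frac{z-1}{z^2}$.
   Context: Monotone Hurwitz numbers: for $g\ge0$, $n\ge1$ and positive integers $\mu_1,\ldots,\mu_n$ with $|\boldsymbol\mu|=\sum\mu_i$, let $m=2g-2+n+|\boldsymbol\mu|$; $\vec H_{g,n}(\boldsymbol\mu)$ is $\frac{1}{|\boldsymbol\mu|!}$ times the number of $m$-tuples of transpositions $(\sigma_1,\ldots,\sigma_m)$ in $S_{|\boldsymbol\mu|}$, with a labelling of the cycles of $\sigma_1\circ\cdots\circ\sigma_m$ by $1,\ldots,n$ so that cycle $i$ has length $\mu_i$, such that the $\sigma_j$ generate a transitive subgroup and, writing $\sigma_j=(a_j\,b_j)$ with $a_j<b_j$, $b_1\le\cdots\le b_m$. Free energy: $F_{g,n}(x_1,\ldots,x_n)=\sum_{\mu_i\ge1}\vec H_{g,n}(\boldsymbol\mu)\prod x_i^{\mu_i}$. *)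

theory Defs
  imports Complex_Main "HOL-Library.FuncSet" "HOL-Combinatorics.Transposition"
    "HOL-Computational_Algebra.Formal_Power_Series"
begin

text \<open>Symmetric group S_d acts on {0..<d} (points 1..d shifted by one).
  A transposition (a b) with a < b is encoded as the pair (a,b).
  A tuple (sigma_1,...,sigma_m) is a list of such pairs.\<close>

definition prod_transp :: "(nat \<times> nat) list \<Rightarrow> nat \<Rightarrow> nat" where
  "prod_transp ts = foldr (\<lambda>(a,b) f. transpose a b \<circ> f) ts id"

definition same_cycle :: "(nat \<Rightarrow> nat) \<Rightarrow> nat \<Rightarrow> nat \<Rightarrow> bool" where
  "same_cycle p x y \<longleftrightarrow> (\<exists>k. (p ^^ k) x = y)"

text \<open>Transitivity of the subgroup generated by the sigma_j: every point is
  reachable from every other one by repeatedly applying generators (the generators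
  are involutions, so this is the orbit of the generated group).\<close>
definition transitive_transp :: "nat \<Rightarrow> (nat \<times> nat) list \<Rightarrow> bool" where
  "transitive_transp d ts \<longleftrightarrow>
     (\<forall>x\<in>{..<d}. \<forall>y\<in>{..<d}.
        (x, y) \<in> {(u, transpose a b u) | u a b. (a, b) \<in> set ts}\<^sup>*)"

text \<open>A labelling is encoded as a map c from points to labels which is
  constant exactly on cycles (so it is a bijection cycles -> labels).\<close>
definition monotone_hurwitz_data :: "nat \<Rightarrow> nat list \<Rightarrow> ((nat \<times> nat) list \<times> (nat \<Rightarrow> nat)) set" where
  "monotone_hurwitz_data g mu =
    (let d = sum_list mu; n = length mu; m = 2 * g + n + d - 2 in
     {(ts, c). length ts = m
        \<and> (\<forall>(a, b) \<in> set ts. a < b \<and> b < d)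
        \<and> sorted (map snd ts)
        \<and> transitive_transp d ts
        \<and> c \<in> {..<d} \<rightarrow>\<^sub>E {..<n}
        \<and> (\<forall>x\<in>{..<d}. \<forall>y\<in>{..<d}. c x = c y \<longleftrightarrow> same_cycle (prod_transp ts) x y)
        \<and> (\<forall>i<n. card {x\<in>{..<d}. c x = i} = mu ! i)})"

definition monotone_hurwitz :: "nat \<Rightarrow> nat list \<Rightarrow> real" where
  "monotone_hurwitz g mu = real (card (monotone_hurwitz_data g mu)) / fact (sum_list mu)"

definition F01 :: "real fps" where
  "F01 = Abs_fps (\<lambda>k. if k = 0 then 0 else monotone_hurwitz 0 [k])"

end

theory Submission
  imports Defs "HOL-Library.Multiset" "HOL-Combinatorics.Cycles"
    "HOL-Analysis.Generalised_Binomial_Theorem"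
begin

unbundle no vec_syntax
notation fps_nth (infixl \<open>$\<close> 75)

definition adj :: "(nat \<times> nat) list \<Rightarrow> (nat \<times> nat) set" where
  "adj es = {(u, Transposition.transpose a b u) | u a b. (a, b) \<in> set es}"

definition conn :: "nat set \<Rightarrow> (nat \<times> nat) list \<Rightarrow> bool" where
  "conn V es \<longleftrightarrow> (\<forall>x\<in>V. \<forall>y\<in>V. (x, y) \<in> (adj es)\<^sup>*)"

definition edges_in :: "nat set \<Rightarrow> (nat \<times> nat) list \<Rightarrow> bool" where
  "edges_in V es \<longleftrightarrow> (\<forall>(a, b)\<in>set es. a \<in> V \<and> b \<in> V)"

definition eclosed :: "nat set \<Rightarrow> (nat \<times> nat) list \<Rightarrow> bool" where
  "eclosed X es \<longleftrightarrow> (\<forall>(a, b)\<in>set es. a \<in> X \<longleftrightarrow> b \<in> X)"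

lemma adj_iff: "(u, v) \<in> adj es \<longleftrightarrow> (\<exists>a b. (a, b) \<in> set es \<and> v = Transposition.transpose a b u)"
  unfolding adj_def by blast

lemma adj_set: "set es = set es' \<Longrightarrow> adj es = adj es'"
  unfolding adj_def by simp

lemma adj_mono: "set es \<subseteq> set es' \<Longrightarrow> adj es \<subseteq> adj es'"
  unfolding adj_def by blast

lemma adj_rtrancl_mono: "set es \<subseteq> set es' \<Longrightarrow> (x, y) \<in> (adj es)\<^sup>* \<Longrightarrow> (x, y) \<in> (adj es')\<^sup>*"
  by (rule subsetD[OF rtrancl_mono[OF adj_mono]])

lemma adj_sym: "(x, y) \<in> adj es \<Longrightarrow> (y, x) \<in> adj es"
  unfolding adj_iff by (metis transpose_involutory)

lemma adj_rtrancl_sym: "(x, y) \<in> (adj es)\<^sup>* \<Longrightarrow> (y, x) \<in> (adj es)\<^sup>*"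
proof (induction rule: rtrancl_induct)
  case base then show ?case by simp
next
  case (step y z)
  then show ?case using adj_sym by (meson converse_rtrancl_into_rtrancl)
qed

lemma adj_edge: "(a, b) \<in> set es \<Longrightarrow> (a, b) \<in> adj es"
  unfolding adj_iff by (metis transpose_apply_first)

lemma closed_compl: "eclosed X es \<Longrightarrow> eclosed (- X) es"
  unfolding eclosed_def by auto

lemma closed_reach:
  assumes "eclosed X es" "x \<in> X" "(x, y) \<in> (adj es)\<^sup>*"
  shows "y \<in> X \<and> (x, y) \<in> (adj (filter (\<lambda>e. fst e \<in> X) es))\<^sup>*"
  using assms(3)
proof (induction rule: rtrancl_induct)
  case base then show ?case using assms by simp
next
  case (step y z)
  then obtain a b where ab: "(a, b) \<in> set es" "z = Transposition.transpose a b y" by (auto simp: adj_iff)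
  show ?case
  proof (cases "y = a \<or> y = b")
    case True
    have yX: "y \<in> X" using step.IH by simp
    have ab': "a \<in> X \<longleftrightarrow> b \<in> X" using assms(1) ab(1) unfolding eclosed_def by blast
    have "a \<in> X" "b \<in> X" using True yX ab' by auto
    then have "(a, b) \<in> set (filter (\<lambda>e. fst e \<in> X) es)" using ab by simp
    then have "(y, z) \<in> adj (filter (\<lambda>e. fst e \<in> X) es)" unfolding adj_iff using ab(2) by blast
    moreover have "z \<in> X" using True ab(2) \<open>a \<in> X\<close> \<open>b \<in> X\<close> by auto
    moreover have "(x, y) \<in> (adj (filter (\<lambda>e. fst e \<in> X) es))\<^sup>*" using step.IH by simp
    ultimately show ?thesis by (simp add: rtrancl.rtrancl_into_rtrancl)
  next
    case False
    then have "z = y" using ab by simp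
    then show ?thesis using step by simp
  qed
qed

lemma comp_props:
  assumes "edges_in V es" "p \<in> V"
  defines "X \<equiv> {x \<in> V. (p, x) \<in> (adj es)\<^sup>*}"
  shows "eclosed X es" "conn X (filter (\<lambda>e. fst e \<in> X) es)" "p \<in> X" "X \<subseteq> V"
proof -
  show cl: "eclosed X es" unfolding eclosed_def
  proof (intro ballI, clarify)
    fix a b assume ab: "(a, b) \<in> set es"
    then have "a \<in> V" "b \<in> V" using assms(1) unfolding edges_in_def by auto
    have e1: "(a, b) \<in> adj es" using ab by (rule adj_edge)
    have e2: "(b, a) \<in> adj es" using adj_sym[OF e1] .
    show "a \<in> X \<longleftrightarrow> b \<in> X"
    proof
      assume "a \<in> X"
      then have "(p, a) \<in> (adj es)\<^sup>*" unfolding X_def by simp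
      then have "(p, b) \<in> (adj es)\<^sup>*" using e1 by (rule rtrancl.rtrancl_into_rtrancl)
      then show "b \<in> X" unfolding X_def using \<open>b \<in> V\<close> by simp
    next
      assume "b \<in> X"
      then have "(p, b) \<in> (adj es)\<^sup>*" unfolding X_def by simp
      then have "(p, a) \<in> (adj es)\<^sup>*" using e2 by (rule rtrancl.rtrancl_into_rtrancl)
      then show "a \<in> X" unfolding X_def using \<open>a \<in> V\<close> by simp
    qed
  qed
  show pX: "p \<in> X" using assms(2) unfolding X_def by simp
  show "X \<subseteq> V" unfolding X_def by auto
  show "conn X (filter (\<lambda>e. fst e \<in> X) es)" unfolding conn_def
  proof (intro ballI)
    fix x y assume "x \<in> X" "y \<in> X"
    then have px: "(p, x) \<in> (adj es)\<^sup>*" and py: "(p, y) \<in> (adj es)\<^sup>*" unfolding X_def by auto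
    have "(p, x) \<in> (adj (filter (\<lambda>e. fst e \<in> X) es))\<^sup>*"
      using closed_reach[OF cl pX px] by simp
    moreover have "(p, y) \<in> (adj (filter (\<lambda>e. fst e \<in> X) es))\<^sup>*"
      using closed_reach[OF cl pX py] by simp
    ultimately show "(x, y) \<in> (adj (filter (\<lambda>e. fst e \<in> X) es))\<^sup>*"
      using adj_rtrancl_sym rtrancl_trans by metis
  qed
qed

lemma join_in:
  assumes "edges_in V es" "p \<in> V" "conn V ((p, q) # es)"
    and "q \<in> {x \<in> V. (p, x) \<in> (adj es)\<^sup>*}"
  shows "conn V es"
proof -
  have "adj ((p, q) # es) \<subseteq> (adj es)\<^sup>*"
  proof clarify
    fix u v assume "(u, v) \<in> adj ((p, q) # es)"
    then obtain a b where ab: "(a, b) \<in> set ((p, q) # es)" "v = Transposition.transpose a b u" by (auto simp: adj_iff)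
    show "(u, v) \<in> (adj es)\<^sup>*"
    proof (cases "(a, b) = (p, q)")
      case True
      have pq: "(p, q) \<in> (adj es)\<^sup>*" using assms(4) by simp
      show ?thesis
      proof (cases "u = p \<or> u = q")
        case True
        moreover have "(q, p) \<in> (adj es)\<^sup>*" using adj_rtrancl_sym[OF pq] .
        ultimately show ?thesis using \<open>(a, b) = (p, q)\<close> ab pq by auto
      next
        case False
        then show ?thesis using \<open>(a, b) = (p, q)\<close> ab by auto
      qed
    next
      case False
      then have "(a, b) \<in> set es" using ab by auto
      then have "(u, v) \<in> adj es" using ab by (auto simp: adj_iff)
      then show ?thesis by simp
    qed
  qed
  then have "(adj ((p, q) # es))\<^sup>* \<subseteq> (adj es)\<^sup>*"
    by (rule rtrancl_subset_rtrancl)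
  then show ?thesis using assms(3) unfolding conn_def by blast
qed

lemma join_out:
  assumes "edges_in V es" "p \<in> V" "q \<in> V" "conn V ((p, q) # es)"
    and X: "X = {x \<in> V. (p, x) \<in> (adj es)\<^sup>*}" and "q \<notin> X"
  shows "conn (V - X) (filter (\<lambda>e. fst e \<notin> X) es)"
proof -
  have cl: "eclosed X es" "p \<in> X" using comp_props[OF assms(1,2)] X by auto
  let ?F = "filter (\<lambda>e. fst e \<notin> X) es"
  have main: "v \<in> X \<or> (q, v) \<in> (adj ?F)\<^sup>*" if "(q, v) \<in> (adj ((p, q) # es))\<^sup>*" for v
    using that
  proof (induction rule: rtrancl_induct)
    case base then show ?case by simp
  next
    case (step v w)
    then obtain a b where ab: "(a, b) \<in> set ((p, q) # es)" "w = Transposition.transpose a b v" by (auto simp: adj_iff)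
    show ?case
    proof (cases "v \<in> X")
      case True
      show ?thesis
      proof (cases "(a, b) = (p, q)")
        case True
        then show ?thesis using ab \<open>v \<in> X\<close> \<open>q \<notin> X\<close> by (cases "v = p"; cases "v = q") auto
      next
        case False
        then have "(a, b) \<in> set es" using ab by auto
        then have "a \<in> X \<longleftrightarrow> b \<in> X" using cl unfolding eclosed_def by auto
        then show ?thesis using ab \<open>v \<in> X\<close>
          by (cases "v = a"; cases "v = b") auto
      qed
    next
      case False
      then have qv: "(q, v) \<in> (adj ?F)\<^sup>*" using step by auto
      show ?thesis
      proof (cases "(a, b) = (p, q)")
        case True
        then show ?thesis using ab False qv cl(2)
          by (cases "v = q"; cases "v = p") auto
      next
        case nf: False
        then have abes: "(a, b) \<in> set es" using ab by auto
        show ?thesis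
        proof (cases "v = a \<or> v = b")
          case True
          then have "a \<notin> X" using False cl abes unfolding eclosed_def by auto
          then have "(a, b) \<in> set ?F" using abes by simp
          then have "(v, w) \<in> adj ?F" using ab by (auto simp: adj_iff)
          then show ?thesis using qv by (simp add: rtrancl.rtrancl_into_rtrancl)
        next
          case f2: False
          then show ?thesis using ab qv by auto
        qed
      qed
    qed
  qed
  show ?thesis unfolding conn_def
  proof (intro ballI)
    fix x y assume "x \<in> V - X" "y \<in> V - X"
    then have "(q, x) \<in> (adj ?F)\<^sup>*" "(q, y) \<in> (adj ?F)\<^sup>*"
      using main assms(3,4) unfolding conn_def by auto
    then show "(x, y) \<in> (adj ?F)\<^sup>*" using adj_rtrancl_sym rtrancl_trans by metis
  qed
qed

lemma edge_count:
  "finite V \<Longrightarrow> V \<noteq> {} \<Longrightarrow> edges_in V es \<Longrightarrow> conn V es \<Longrightarrow> card V \<le> length es + 1"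
proof (induction "length es" arbitrary: es V rule: less_induct)
  case less
  show ?case
  proof (cases es)
    case Nil
    then have "adj es = {}" unfolding adj_def by simp
    then have "\<forall>x\<in>V. \<forall>y\<in>V. x = y" using less.prems(4) unfolding conn_def by auto
    then have "card V \<le> 1" using less.prems(1) by (simp add: card_le_Suc0_iff_eq)
    then show ?thesis by simp
  next
    case (Cons e es')
    obtain p q where e: "e = (p, q)" by (cases e) blast
    have pq: "p \<in> V" "q \<in> V" using less.prems(3) unfolding edges_in_def Cons e by auto
    have ei: "edges_in V es'" using less.prems(3) unfolding edges_in_def Cons by auto
    define X where "X = {x \<in> V. (p, x) \<in> (adj es')\<^sup>*}"
    have cp: "eclosed X es'" "conn X (filter (\<lambda>e. fst e \<in> X) es')" "p \<in> X" "X \<subseteq> V"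
      using comp_props[OF ei pq(1)] unfolding X_def by auto
    have cV: "conn V ((p, q) # es')" using less.prems(4) Cons e by simp
    show ?thesis
    proof (cases "q \<in> X")
      case True
      have "conn V es'" using join_in[OF ei pq(1) cV] True unfolding X_def by simp
      note cVe = this
      have "length es' < length es" using Cons by simp
      then have "card V \<le> length es' + 1"
        by (rule less.hyps[of es' V, OF _ less.prems(1) less.prems(2) ei cVe])
      then show ?thesis using Cons by simp
    next
      case False
      have c2: "conn (V - X) (filter (\<lambda>e. fst e \<notin> X) es')"
        using join_out[OF ei pq cV X_def False] .
      have ei1: "edges_in X (filter (\<lambda>e. fst e \<in> X) es')"
        unfolding edges_in_def
      proof (intro ballI, clarify)
        fix a b assume "(a, b) \<in> set (filter (\<lambda>e. fst e \<in> X) es')"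
        then have "(a, b) \<in> set es'" "a \<in> X" by auto
        then show "a \<in> X \<and> b \<in> X" using cp(1) unfolding eclosed_def by blast
      qed
      have ei2: "edges_in (V - X) (filter (\<lambda>e. fst e \<notin> X) es')"
        unfolding edges_in_def
      proof (intro ballI, clarify)
        fix a b assume "(a, b) \<in> set (filter (\<lambda>e. fst e \<notin> X) es')"
        then have "(a, b) \<in> set es'" "a \<notin> X" by auto
        then show "a \<in> V - X \<and> b \<in> V - X" using cp(1) ei unfolding eclosed_def edges_in_def by blast
      qed
      have l1: "length (filter (\<lambda>e. fst e \<in> X) es') < length es"
        using Cons length_filter_le[of _ es'] by (metis le_imp_less_Suc length_Cons)
      have l2: "length (filter (\<lambda>e. fst e \<notin> X) es') < length es"
        using Cons length_filter_le[of _ es'] by (metis le_imp_less_Suc length_Cons)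
      have fX: "finite X" using cp(4) less.prems(1) by (rule finite_subset)
      have ne1: "X \<noteq> {}" using cp(3) by blast
      have h1: "card X \<le> length (filter (\<lambda>e. fst e \<in> X) es') + 1"
        by (rule less.hyps[OF l1 fX ne1 ei1 cp(2)])
      have fY: "finite (V - X)" using less.prems(1) by simp
      have ne2: "V - X \<noteq> {}" using pq(2) False by blast
      have h2: "card (V - X) \<le> length (filter (\<lambda>e. fst e \<notin> X) es') + 1"
        by (rule less.hyps[OF l2 fY ne2 ei2 c2])
      have "card V = card X + card (V - X)"
        using card_Diff_subset[OF fX cp(4)] card_mono[OF less.prems(1) cp(4)] by simp
      moreover have "length (filter (\<lambda>e. fst e \<in> X) es') + length (filter (\<lambda>e. fst e \<notin> X) es') = length es'"
        by (rule sum_length_filter_compl)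
      ultimately show ?thesis using h1 h2 Cons by simp
    qed
  qed
qed

definition Tr :: "nat set \<Rightarrow> (nat \<times> nat) list set" where
  "Tr V = {ts. length ts = card V - 1 \<and> (\<forall>(a, b)\<in>set ts. a < b \<and> a \<in> V \<and> b \<in> V)
              \<and> sorted (map snd ts) \<and> conn V ts}"

lemma conn_set: "set es = set es' \<Longrightarrow> conn V es = conn V es'"
  unfolding conn_def using adj_set by metis

lemma Tr_edges_in: "ts \<in> Tr V \<Longrightarrow> edges_in V ts"
  unfolding Tr_def edges_in_def by auto

lemma last_edge:
  assumes "finite V" "card V \<ge> 2" "ts \<in> Tr V"
  shows "\<exists>ts' a. ts = ts' @ [(a, Max V)] \<and> a \<in> V \<and> a < Max V"
proof -
  let ?M = "Max V"
  have V0: "V \<noteq> {}" using assms(2) by auto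
  have MV: "?M \<in> V" using Max_in[OF assms(1) V0] .
  have le: "b \<le> ?M" if "b \<in> V" for b using Max_ge[OF assms(1) that] .
  have ed: "\<And>a b. (a, b) \<in> set ts \<Longrightarrow> a < b \<and> a \<in> V \<and> b \<in> V"
    using assms(3) unfolding Tr_def by auto
  have nsub: "\<not> V \<subseteq> {?M}"
  proof
    assume "V \<subseteq> {?M}"
    then have "card V \<le> card {?M}" by (intro card_mono) auto
    then show False using assms(2) by simp
  qed
  then obtain v where v: "v \<in> V" "v \<noteq> ?M" by blast
  have ex: "\<exists>a. (a, ?M) \<in> set ts"
  proof (rule ccontr)
    assume nex: "\<not> ?thesis"
    have "w = ?M" if "(?M, w) \<in> (adj ts)\<^sup>*" for w
      using that
    proof (induction rule: rtrancl_induct)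
      case base then show ?case by simp
    next
      case (step y z)
      then obtain a b where ab: "(a, b) \<in> set ts" "z = Transposition.transpose a b y" unfolding adj_iff by blast
      have "b \<noteq> ?M" using nex ab(1) by blast
      moreover have "a \<noteq> ?M" using ed[OF ab(1)] le[of b] by linarith
      ultimately show ?case using ab(2) step.IH by simp
    qed
    moreover have "(?M, v) \<in> (adj ts)\<^sup>*" using assms(3) MV v(1) unfolding Tr_def conn_def by blast
    ultimately show False using v(2) by simp
  qed
  then obtain a0 where a0: "(a0, ?M) \<in> set ts" by blast
  then have "ts \<noteq> []" by auto
  then obtain ts0 l where tsd: "ts = ts0 @ [l]" by (metis rev_exhaust)
  obtain a b where lab: "l = (a, b)" by (cases l) blast
  have srt: "sorted (map snd ts0 @ [b])" using assms(3) unfolding Tr_def tsd lab by simp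
  have lt: "(a, b) \<in> set ts" unfolding tsd lab by simp
  have "?M \<le> b"
  proof (cases "(a0, ?M) = (a, b)")
    case True then show ?thesis by simp
  next
    case False
    then have "(a0, ?M) \<in> set ts0" using a0 unfolding tsd lab by auto
    then show ?thesis using srt by (auto simp: sorted_append)
  qed
  moreover have "b \<le> ?M" using ed[OF lt] le by simp
  ultimately have "b = ?M" by simp
  then show ?thesis using tsd lab ed[OF lt] by blast
qed

definition phi :: "nat set \<Rightarrow> (nat \<times> nat) list \<Rightarrow> nat set \<times> nat \<times> (nat \<times> nat) list \<times> (nat \<times> nat) list" where
  "phi V ts = (let ts' = butlast ts; a = fst (last ts); X = {x \<in> V. (a, x) \<in> (adj ts')\<^sup>*}
     in (X, a, filter (\<lambda>e. fst e \<in> X) ts', filter (\<lambda>e. fst e \<notin> X) ts'))"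

definition psi :: "nat set \<Rightarrow> nat set \<times> nat \<times> (nat \<times> nat) list \<times> (nat \<times> nat) list \<Rightarrow> (nat \<times> nat) list" where
  "psi V t = (case t of (X, a, s1, s2) \<Rightarrow> sort_key snd (s1 @ s2) @ [(a, Max V)])"

definition SS :: "nat set \<Rightarrow> (nat set \<times> nat \<times> (nat \<times> nat) list \<times> (nat \<times> nat) list) set" where
  "SS V = {(X, a, s1, s2). X \<subseteq> V - {Max V} \<and> a \<in> X \<and> s1 \<in> Tr X \<and> s2 \<in> Tr (V - X)}"

lemma mset_filter_split: "mset xs = mset (filter P xs) + mset (filter (\<lambda>x. \<not> P x) xs)"
  by (induction xs) auto

lemma decomp:
  assumes "finite V" "card V \<ge> 2" "ts \<in> Tr V"
  shows "phi V ts \<in> SS V \<and> psi V (phi V ts) = ts"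
proof -
  let ?M = "Max V"
  obtain ts' a where ts: "ts = ts' @ [(a, ?M)]" "a \<in> V" "a < ?M"
    using last_edge[OF assms] by blast
  have V0: "V \<noteq> {}" using assms(2) by auto
  have MV: "?M \<in> V" using Max_in[OF assms(1) V0] .
  have ei: "edges_in V ts'" using Tr_edges_in[OF assms(3)] ts(1) unfolding edges_in_def by auto
  have cV: "conn V ((a, ?M) # ts')"
    using assms(3) ts(1) conn_set[of "(a, ?M) # ts'" ts V] unfolding Tr_def by auto
  have len: "length ts' = card V - 2" using assms(3) ts(1) unfolding Tr_def by auto
  have srt: "sorted (map snd ts')" using assms(3) ts(1) unfolding Tr_def by (simp add: sorted_append)
  have ed: "\<And>p q. (p, q) \<in> set ts' \<Longrightarrow> p < q" using assms(3) ts(1) unfolding Tr_def by auto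
  define X where "X = {x \<in> V. (a, x) \<in> (adj ts')\<^sup>*}"
  define s1 where "s1 = filter (\<lambda>e. fst e \<in> X) ts'"
  define s2 where "s2 = filter (\<lambda>e. fst e \<notin> X) ts'"
  have ph: "phi V ts = (X, a, s1, s2)" unfolding phi_def ts(1) X_def s1_def s2_def by (simp add: Let_def)
  have cp: "eclosed X ts'" "conn X s1" "a \<in> X" "X \<subseteq> V"
    using comp_props[OF ei ts(2)] unfolding X_def s1_def by auto
  have MX: "?M \<notin> X"
  proof
    assume "?M \<in> X"
    then have "conn V ts'" using join_in[OF ei ts(2) cV] unfolding X_def by simp
    then have "card V \<le> length ts' + 1" using edge_count[OF assms(1) V0 ei] by simp
    then show False using len assms(2) by simp
  qed
  have c2: "conn (V - X) s2" using join_out[OF ei ts(2) MV cV X_def MX] unfolding s2_def .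
  have fX: "finite X" using cp(4) assms(1) by (rule finite_subset)
  have ei1: "edges_in X s1" unfolding edges_in_def s1_def
  proof (intro ballI, clarify)
    fix p q assume "(p, q) \<in> set (filter (\<lambda>e. fst e \<in> X) ts')"
    then have "(p, q) \<in> set ts'" "p \<in> X" by auto
    then show "p \<in> X \<and> q \<in> X" using cp(1) unfolding eclosed_def by blast
  qed
  have ei2: "edges_in (V - X) s2" unfolding edges_in_def s2_def
  proof (intro ballI, clarify)
    fix p q assume "(p, q) \<in> set (filter (\<lambda>e. fst e \<notin> X) ts')"
    then have "(p, q) \<in> set ts'" "p \<notin> X" by auto
    then show "p \<in> V - X \<and> q \<in> V - X" using cp(1) ei unfolding eclosed_def edges_in_def by blast
  qed
  have h1: "card X \<le> length s1 + 1" using edge_count[OF fX _ ei1 cp(2)] cp(3) by blast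
  have h2: "card (V - X) \<le> length s2 + 1"
    using edge_count[OF _ _ ei2 c2] assms(1) MV MX by blast
  have cVX: "card V = card X + card (V - X)"
    using card_Diff_subset[OF fX cp(4)] card_mono[OF assms(1) cp(4)] by simp
  have ls: "length s1 + length s2 = length ts'" unfolding s1_def s2_def by (rule sum_length_filter_compl)
  have l1: "length s1 = card X - 1" and l2: "length s2 = card (V - X) - 1"
    using h1 h2 cVX ls len assms(2) by auto
  have s1T: "s1 \<in> Tr X" unfolding Tr_def
  proof (intro CollectI conjI)
    show "length s1 = card X - 1" by (rule l1)
    show "\<forall>(p, q)\<in>set s1. p < q \<and> p \<in> X \<and> q \<in> X"
      using ei1 ed unfolding edges_in_def s1_def by auto
    show "sorted (map snd s1)" unfolding s1_def using srt by (rule sorted_filter)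
    show "conn X s1" by (rule cp(2))
  qed
  have s2T: "s2 \<in> Tr (V - X)" unfolding Tr_def
  proof (intro CollectI conjI)
    show "length s2 = card (V - X) - 1" by (rule l2)
    show "\<forall>(p, q)\<in>set s2. p < q \<and> p \<in> V - X \<and> q \<in> V - X"
      using ei2 ed unfolding edges_in_def s2_def by auto
    show "sorted (map snd s2)" unfolding s2_def using srt by (rule sorted_filter)
    show "conn (V - X) s2" by (rule c2)
  qed
  have inS: "(X, a, s1, s2) \<in> SS V" unfolding SS_def using s1T s2T cp(3,4) MX by auto
  have "sort_key snd (s1 @ s2) = ts'"
  proof (rule properties_for_sort_key)
    show "mset ts' = mset (s1 @ s2)" unfolding s1_def s2_def
      using mset_filter_split[of ts' "\<lambda>e. fst e \<in> X"] by simp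
    show "sorted (map snd ts')" by (rule srt)
    fix k assume k: "k \<in> set ts'"
    have kk: "\<And>x. x \<in> set ts' \<Longrightarrow> snd k = snd x \<Longrightarrow> (fst x \<in> X \<longleftrightarrow> fst k \<in> X)"
    proof -
      fix x assume "x \<in> set ts'" "snd k = snd x"
      then have "fst x \<in> X \<longleftrightarrow> snd x \<in> X" "fst k \<in> X \<longleftrightarrow> snd k \<in> X"
        using cp(1) k unfolding eclosed_def by auto
      then show "fst x \<in> X \<longleftrightarrow> fst k \<in> X" using \<open>snd k = snd x\<close> by simp
    qed
    show "filter (\<lambda>x. snd k = snd x) ts' = filter (\<lambda>x. snd k = snd x) (s1 @ s2)"
    proof (cases "fst k \<in> X")
      case True
      have "filter (\<lambda>x. snd k = snd x) s1 = filter (\<lambda>x. snd k = snd x) ts'"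
        unfolding s1_def filter_filter by (rule filter_cong) (use kk True in auto)
      moreover have "filter (\<lambda>x. snd k = snd x) s2 = []"
        unfolding s2_def filter_filter using kk True by (auto simp: filter_empty_conv)
      ultimately show ?thesis by simp
    next
      case False
      have "filter (\<lambda>x. snd k = snd x) s2 = filter (\<lambda>x. snd k = snd x) ts'"
        unfolding s2_def filter_filter by (rule filter_cong) (use kk False in auto)
      moreover have "filter (\<lambda>x. snd k = snd x) s1 = []"
        unfolding s1_def filter_filter using kk False by (auto simp: filter_empty_conv)
      ultimately show ?thesis by simp
    qed
  qed
  then have "psi V (X, a, s1, s2) = ts" unfolding psi_def ts(1) by simp
  then show ?thesis using inS ph by simp
qed

lemma compose:
  assumes "finite V" "t \<in> SS V"
  shows "psi V t \<in> Tr V \<and> phi V (psi V t) = t"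
proof -
  let ?M = "Max V"
  obtain X a s1 s2 where t: "t = (X, a, s1, s2)" by (cases t) blast
  have XV: "X \<subseteq> V - {?M}" and aX: "a \<in> X" and s1T: "s1 \<in> Tr X" and s2T: "s2 \<in> Tr (V - X)"
    using assms(2) unfolding SS_def t by auto
  have V0: "V \<noteq> {}" using XV aX by blast
  have MV: "?M \<in> V" using Max_in[OF assms(1) V0] .
  have le: "b \<le> ?M" if "b \<in> V" for b using Max_ge[OF assms(1) that] .
  have MY: "?M \<in> V - X" using MV XV by blast
  have fX: "finite X" using XV assms(1) finite_subset by blast
  define u where "u = sort_key snd (s1 @ s2)"
  have setu: "set u = set s1 \<union> set s2" unfolding u_def by simp
  have e1: "\<And>p q. (p, q) \<in> set s1 \<Longrightarrow> p < q \<and> p \<in> X \<and> q \<in> X" using s1T unfolding Tr_def by auto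
  have e2: "\<And>p q. (p, q) \<in> set s2 \<Longrightarrow> p < q \<and> p \<in> V - X \<and> q \<in> V - X" using s2T unfolding Tr_def by auto
  have c1: "conn X s1" using s1T unfolding Tr_def by simp
  have c2: "conn (V - X) s2" using s2T unfolding Tr_def by simp
  have clu: "eclosed X u" unfolding eclosed_def setu
  proof (intro ballI, clarify)
    fix p q assume "(p, q) \<in> set s1 \<union> set s2"
    then show "p \<in> X \<longleftrightarrow> q \<in> X" using e1 e2 by blast
  qed
  have compX: "{x \<in> V. (a, x) \<in> (adj u)\<^sup>*} = X"
  proof
    show "{x \<in> V. (a, x) \<in> (adj u)\<^sup>*} \<subseteq> X"
      using closed_reach[OF clu aX] by blast
    show "X \<subseteq> {x \<in> V. (a, x) \<in> (adj u)\<^sup>*}"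
    proof
      fix x assume "x \<in> X"
      then have "(a, x) \<in> (adj s1)\<^sup>*" using c1 aX unfolding conn_def by blast
      then have "(a, x) \<in> (adj u)\<^sup>*" by (rule adj_rtrancl_mono[rotated]) (simp add: setu)
      then show "x \<in> {x \<in> V. (a, x) \<in> (adj u)\<^sup>*}" using \<open>x \<in> X\<close> XV by blast
    qed
  qed
  have f1: "filter (\<lambda>e. fst e \<in> X) u = s1"
  proof -
    have "filter (\<lambda>e. fst e \<in> X) s1 = s1" using e1 by (auto simp: filter_id_conv)
    moreover have "filter (\<lambda>e. fst e \<in> X) s2 = []" using e2 by (auto simp: filter_empty_conv)
    moreover have "sort_key snd s1 = s1" using s1T unfolding Tr_def by (simp add: sort_key_id_if_sorted)
    ultimately show ?thesis unfolding u_def filter_sort by simp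
  qed
  have f2: "filter (\<lambda>e. fst e \<notin> X) u = s2"
  proof -
    have "filter (\<lambda>e. fst e \<notin> X) s1 = []" using e1 by (auto simp: filter_empty_conv)
    moreover have "filter (\<lambda>e. fst e \<notin> X) s2 = s2" using e2 by (auto simp: filter_id_conv)
    moreover have "sort_key snd s2 = s2" using s2T unfolding Tr_def by (simp add: sort_key_id_if_sorted)
    ultimately show ?thesis unfolding u_def filter_sort by simp
  qed
  have ps: "psi V t = u @ [(a, ?M)]" unfolding psi_def t u_def by simp
  have "phi V (psi V t) = phi V (u @ [(a, ?M)])" using ps by simp
  also have "\<dots> = t" unfolding phi_def Let_def t using compX f1 f2 by simp
  finally have "phi V (psi V t) = t" .
  moreover have "psi V t \<in> Tr V" unfolding Tr_def ps
  proof (intro CollectI conjI)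
    have XsV: "X \<subseteq> V" using XV by blast
    have "card X > 0" using fX aX by (auto simp: card_gt_0_iff)
    moreover have "card (V - X) > 0" using assms(1) MY by (auto simp: card_gt_0_iff)
    moreover have "card V = card X + card (V - X)"
      using card_Diff_subset[OF fX XsV] card_mono[OF assms(1) XsV] by simp
    moreover have "length s1 = card X - 1" "length s2 = card (V - X) - 1"
      using s1T s2T unfolding Tr_def by auto
    ultimately show "length (u @ [(a, ?M)]) = card V - 1" unfolding u_def by simp
    have aV: "a \<in> V" "a \<noteq> ?M" using aX XV by auto
    then have "a < ?M" using le[of a] by simp
    show "\<forall>(p, q)\<in>set (u @ [(a, ?M)]). p < q \<and> p \<in> V \<and> q \<in> V"
    proof (intro ballI, clarify)
      fix p q assume "(p, q) \<in> set (u @ [(a, ?M)])"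
      then have "(p, q) \<in> set s1 \<or> (p, q) \<in> set s2 \<or> (p, q) = (a, ?M)" using setu by auto
      then show "p < q \<and> p \<in> V \<and> q \<in> V"
      proof (elim disjE)
        assume "(p, q) \<in> set s1" then show ?thesis using e1 XsV by blast
      next
        assume "(p, q) \<in> set s2" then show ?thesis using e2 by blast
      next
        assume "(p, q) = (a, ?M)" then show ?thesis using \<open>a < ?M\<close> aV MV by simp
      qed
    qed
    have "\<forall>x\<in>set (map snd u). x \<le> ?M"
    proof
      fix x assume "x \<in> set (map snd u)"
      then obtain p where "(p, x) \<in> set s1 \<union> set s2" unfolding setu[symmetric] by auto
      then have "x \<in> V" using e1 e2 XV by blast
      then show "x \<le> ?M" by (rule le)
    qed
    then show "sorted (map snd (u @ [(a, ?M)]))" unfolding u_def by (simp add: sorted_append)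
    let ?R = "(adj (u @ [(a, ?M)]))\<^sup>*"
    have sub1: "set s1 \<subseteq> set (u @ [(a, ?M)])" "set s2 \<subseteq> set (u @ [(a, ?M)])" using setu by auto
    have Mx: "(?M, x) \<in> ?R" if "x \<in> V" for x
    proof (cases "x \<in> X")
      case True
      then have "(a, x) \<in> (adj s1)\<^sup>*" using c1 aX unfolding conn_def by blast
      then have r1: "(a, x) \<in> ?R" using adj_rtrancl_mono[OF sub1(1)] by simp
      have "(a, ?M) \<in> adj (u @ [(a, ?M)])" by (rule adj_edge) simp
      then have "(?M, a) \<in> adj (u @ [(a, ?M)])" by (rule adj_sym)
      then show ?thesis using r1 by (rule converse_rtrancl_into_rtrancl)
    next
      case False
      then have "(?M, x) \<in> (adj s2)\<^sup>*" using c2 MY that unfolding conn_def by blast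
      then show ?thesis using adj_rtrancl_mono[OF sub1(2)] by simp
    qed
    show "conn V (u @ [(a, ?M)])" unfolding conn_def
    proof (intro ballI)
      fix x y assume "x \<in> V" "y \<in> V"
      then show "(x, y) \<in> ?R" using Mx[of x] Mx[of y] adj_rtrancl_sym rtrancl_trans by metis
    qed
  qed
  ultimately show ?thesis by simp
qed

lemma Tr_finite: "finite V \<Longrightarrow> finite (Tr V)"
proof -
  assume fV: "finite V"
  have "Tr V \<subseteq> {ts. set ts \<subseteq> V \<times> V \<and> length ts = card V - 1}" unfolding Tr_def by auto
  moreover have "finite {ts. set ts \<subseteq> V \<times> V \<and> length ts = card V - 1}"
    using finite_lists_length_eq[of "V \<times> V" "card V - 1"] fV by simp
  ultimately show ?thesis by (rule finite_subset)
qed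

lemma card_Tr_rec:
  assumes "finite V" "card V \<ge> 2"
  shows "card (Tr V) = (\<Sum>X\<in>Pow (V - {Max V}). card X * (card (Tr X) * card (Tr (V - X))))"
proof -
  have "bij_betw (psi V) (SS V) (Tr V)"
  proof (rule bij_betw_byWitness[where f' = "phi V"])
    show "\<forall>t\<in>SS V. phi V (psi V t) = t" using compose[OF assms(1)] by blast
    show "\<forall>ts\<in>Tr V. psi V (phi V ts) = ts" using decomp[OF assms] by blast
    show "psi V ` SS V \<subseteq> Tr V" using compose[OF assms(1)] by blast
    show "phi V ` Tr V \<subseteq> SS V" using decomp[OF assms] by blast
  qed
  then have "card (Tr V) = card (SS V)" by (simp add: bij_betw_same_card)
  also have "SS V = (SIGMA X:Pow (V - {Max V}). SIGMA a:X. Tr X \<times> Tr (V - X))"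
    unfolding SS_def by auto
  also have "card \<dots> = (\<Sum>X\<in>Pow (V - {Max V}). card (SIGMA a:X. Tr X \<times> Tr (V - X)))"
  proof (rule card_SigmaI)
    show "finite (Pow (V - {Max V}))" using assms(1) by simp
    show "\<forall>X\<in>Pow (V - {Max V}). finite (SIGMA a:X. Tr X \<times> Tr (V - X))"
    proof
      fix X assume "X \<in> Pow (V - {Max V})"
      then have "finite X" using assms(1) finite_subset by auto
      then show "finite (SIGMA a:X. Tr X \<times> Tr (V - X))"
        using Tr_finite assms(1) by auto
    qed
  qed
  also have "\<dots> = (\<Sum>X\<in>Pow (V - {Max V}). card X * (card (Tr X) * card (Tr (V - X))))"
  proof (rule sum.cong[OF refl])
    fix X assume "X \<in> Pow (V - {Max V})"
    then have "finite X" using assms(1) finite_subset by auto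
    then show "card (SIGMA a:X. Tr X \<times> Tr (V - X)) = card X * (card (Tr X) * card (Tr (V - X)))"
      using card_SigmaI[of X "\<lambda>_. Tr X \<times> Tr (V - X)"] Tr_finite assms(1)
      by (simp add: card_cartesian_product)
  qed
  finally show ?thesis .
qed

lemma foldr_prod_gen:
  "foldr (\<lambda>(a, b) f. Transposition.transpose a b \<circ> f) xs g = foldr (\<lambda>(a, b) f. Transposition.transpose a b \<circ> f) xs id \<circ> g"
  by (induction xs) (auto simp: comp_assoc)

lemma prod_append: "prod_transp (xs @ ys) = prod_transp xs \<circ> prod_transp ys"
proof -
  let ?F = "(\<lambda>(a, b) f. Transposition.transpose a b \<circ> f) :: nat \<times> nat \<Rightarrow> (nat \<Rightarrow> nat) \<Rightarrow> nat \<Rightarrow> nat"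
  have "prod_transp (xs @ ys) = foldr ?F xs (foldr ?F ys id)" unfolding prod_transp_def by simp
  also have "\<dots> = foldr ?F xs id \<circ> foldr ?F ys id" by (rule foldr_prod_gen)
  finally show ?thesis unfolding prod_transp_def .
qed

lemma prod_Nil [simp]: "prod_transp [] = id"
  unfolding prod_transp_def by simp

lemma prod_Cons [simp]: "prod_transp ((a, b) # xs) = Transposition.transpose a b \<circ> prod_transp xs"
  unfolding prod_transp_def by simp

lemma prod_perm: "permutation (prod_transp xs)"
proof (induction xs)
  case Nil then show ?case by (simp add: permutation_id)
next
  case (Cons x xs)
  obtain a b where ab: "x = (a, b)" by (cases x) blast
  have eq: "prod_transp (x # xs) = Transposition.transpose a b \<circ> prod_transp xs" using ab by simp
  show ?case unfolding eq by (rule permutation_compose[OF permutation_swap_id Cons.IH])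
qed

lemma prod_filter:
  assumes "eclosed Z es" "x \<in> Z"
  shows "prod_transp es x = prod_transp (filter (\<lambda>e. fst e \<in> Z) es) x \<and> prod_transp es x \<in> Z"
  using assms
proof (induction es)
  case Nil then show ?case by simp
next
  case (Cons e es)
  obtain p q where e: "e = (p, q)" by (cases e) blast
  have cl: "eclosed Z es" and pq: "p \<in> Z \<longleftrightarrow> q \<in> Z" using Cons.prems(1) unfolding eclosed_def e by auto
  have IH: "prod_transp es x = prod_transp (filter (\<lambda>e. fst e \<in> Z) es) x" "prod_transp es x \<in> Z"
    using Cons.IH[OF cl Cons.prems(2)] by auto
  show ?case
  proof (cases "p \<in> Z")
    case True
    then have "q \<in> Z" using pq by simp
    have "Transposition.transpose p q (prod_transp es x) \<in> Z"
      using IH(2) True \<open>q \<in> Z\<close> by (auto simp: Transposition.transpose_def)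
    then show ?thesis using IH True e by simp
  next
    case False
    then have "q \<notin> Z" using pq by simp
    then have "Transposition.transpose p q (prod_transp es x) = prod_transp es x" using IH(2) False
      by (intro transpose_apply_other) auto
    then show ?thesis using IH False e by simp
  qed
qed

lemma prod_outside:
  assumes "edges_in V es" "x \<notin> V"
  shows "prod_transp es x = x"
proof -
  have "eclosed (- V) es" using assms(1) unfolding eclosed_def edges_in_def by auto
  moreover have "filter (\<lambda>e. fst e \<in> - V) es = []"
    using assms(1) unfolding edges_in_def by (auto simp: filter_empty_conv)
  ultimately show ?thesis using prod_filter[of "- V" es x] assms(2) by simp
qed

lemma prod_inside:
  assumes "edges_in V es" "x \<in> V"
  shows "prod_transp es x \<in> V"
proof -
  have "eclosed V es" using assms(1) unfolding eclosed_def edges_in_def by auto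
  then show ?thesis using prod_filter[of V es x] assms(2) by blast
qed

lemma iter_closed: "(\<And>x. x \<in> S \<Longrightarrow> f x \<in> S) \<Longrightarrow> x \<in> S \<Longrightarrow> (f ^^ k) x \<in> S"
  by (induction k) auto

lemma same_cycle_step: "same_cycle p x y \<Longrightarrow> same_cycle p x (p y)"
proof -
  assume "same_cycle p x y"
  then obtain k where "(p ^^ k) x = y" unfolding same_cycle_def by blast
  then have "(p ^^ Suc k) x = p y" by simp
  then show ?thesis unfolding same_cycle_def by blast
qed

lemma same_cycle_refl: "same_cycle p x x"
  unfolding same_cycle_def by (rule exI[of _ 0]) simp

lemma same_cycle_from:
  assumes "permutation p" "same_cycle p m x" "same_cycle p m y"
  shows "same_cycle p x y"
proof -
  obtain n where n: "(p ^^ n) = id" "n > 0" using permutation_is_nilpotent[OF assms(1)] by blast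
  obtain k where k: "(p ^^ k) m = x" using assms(2) unfolding same_cycle_def by blast
  obtain j where j: "(p ^^ j) m = y" using assms(3) unfolding same_cycle_def by blast
  have pnk: "p ^^ (n * k) = id" using n(1) by (simp add: funpow_mult[symmetric])
  have nk: "(n - 1) * k + k = n * k" using n(2) by (simp add: algebra_simps)
  have "(p ^^ ((n - 1) * k)) x = (p ^^ ((n - 1) * k)) ((p ^^ k) m)" using k by simp
  also have "\<dots> = (p ^^ ((n - 1) * k + k)) m" by (simp only: funpow_add o_apply)
  also have "\<dots> = m" unfolding nk pnk by simp
  finally have xm: "(p ^^ ((n - 1) * k)) x = m" .
  have "(p ^^ (j + (n - 1) * k)) x = (p ^^ j) ((p ^^ ((n - 1) * k)) x)" by (simp only: funpow_add o_apply)
  also have "\<dots> = y" using xm j by simp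
  finally show ?thesis unfolding same_cycle_def by blast
qed

lemma orbit_lemma:
  assumes cyc: "\<And>x y. x \<in> S \<Longrightarrow> y \<in> S \<Longrightarrow> same_cycle f x y"
    and cl: "\<And>x. x \<in> S \<Longrightarrow> f x \<in> S" and cS: "c \<in> S" and Pfc: "P (f c)"
    and st: "\<And>x. x \<in> S \<Longrightarrow> x \<noteq> c \<Longrightarrow> P x \<Longrightarrow> P (f x)"
  shows "\<And>x. x \<in> S \<Longrightarrow> P x"
proof -
  let ?T = "{x \<in> S. P x}"
  have fcT: "f c \<in> ?T" using cl[OF cS] Pfc by simp
  have Pc: "P c"
  proof (rule ccontr)
    assume nP: "\<not> P c"
    have clT: "f x \<in> ?T" if "x \<in> ?T" for x
    proof -
      have xS: "x \<in> S" and Px: "P x" using that by auto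
      have "x \<noteq> c" using Px nP by blast
      then have "P (f x)" using st[OF xS _ Px] by simp
      then show ?thesis using cl[OF xS] by simp
    qed
    obtain k where "(f ^^ k) (f c) = c" using cyc[OF cl[OF cS] cS] unfolding same_cycle_def by blast
    moreover have "(f ^^ k) (f c) \<in> ?T" by (rule iter_closed[of ?T f, OF clT fcT])
    ultimately show False using nP by simp
  qed
  have clT: "f x \<in> ?T" if "x \<in> ?T" for x
  proof (cases "x = c")
    case True then show ?thesis using fcT by simp
  next
    case False
    have xS: "x \<in> S" and Px: "P x" using that by auto
    have "P (f x)" using st[OF xS False Px] .
    then show ?thesis using cl[OF xS] by simp
  qed
  have cT: "c \<in> ?T" using cS Pc by simp
  fix x assume xS: "x \<in> S"
  obtain k where "(f ^^ k) c = x" using cyc[OF cS xS] unfolding same_cycle_def by blast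
  moreover have "(f ^^ k) c \<in> ?T" by (rule iter_closed[of ?T f, OF clT cT])
  ultimately show "P x" by simp
qed

lemma Tr_cycle:
  "finite V \<Longrightarrow> V \<noteq> {} \<Longrightarrow> ts \<in> Tr V \<Longrightarrow> \<forall>x\<in>V. \<forall>y\<in>V. same_cycle (prod_transp ts) x y"
proof (induction "card V" arbitrary: V ts rule: less_induct)
  case less
  show ?case
  proof (cases "card V \<ge> 2")
    case False
    moreover have "card V > 0" using less.prems(1,2) by (simp add: card_gt_0_iff)
    ultimately have "card V = 1" by linarith
    then obtain v where V: "V = {v}" using card_1_singletonE by blast
    show ?thesis unfolding V using same_cycle_refl by simp
  next
    case True
    note fV = less.prems(1) and tsT = less.prems(3)
    let ?M = "Max V"
    have MV: "?M \<in> V" using Max_in[OF fV less.prems(2)] .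
    obtain X a s1 s2 where t: "phi V ts = (X, a, s1, s2)" by (cases "phi V ts") blast
    have dc: "(X, a, s1, s2) \<in> SS V" "psi V (X, a, s1, s2) = ts"
      using decomp[OF fV True tsT] t by auto
    have XV: "X \<subseteq> V - {?M}" and aX: "a \<in> X" and s1T: "s1 \<in> Tr X" and s2T: "s2 \<in> Tr (V - X)"
      using dc(1) unfolding SS_def by auto
    define u where "u = sort_key snd (s1 @ s2)"
    have ts: "ts = u @ [(a, ?M)]" using dc(2) unfolding psi_def u_def by simp
    have ph: "phi V ts = (X, a, s1, s2)" by (rule t)
    then have Xd: "X = {x \<in> V. (a, x) \<in> (adj u)\<^sup>*}" and s1d: "s1 = filter (\<lambda>e. fst e \<in> X) u"
      and s2d: "s2 = filter (\<lambda>e. fst e \<notin> X) u"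
      unfolding phi_def ts Let_def by auto
    have eiu: "edges_in V u" using Tr_edges_in[OF tsT] unfolding ts edges_in_def by auto
    have aV: "a \<in> V" using aX XV by blast
    have clX: "eclosed X u" using comp_props(1)[OF eiu aV] Xd by simp
    have clY: "eclosed (- X) u" using closed_compl[OF clX] .
    have MX: "?M \<notin> X" using XV by blast
    have XsV: "X \<subseteq> V" using XV by blast
    have fX: "finite X" using XsV fV by (rule finite_subset)
    have cX: "card X < card V" using psubset_card_mono[OF fV] XsV MX MV by blast
    have cY: "card (V - X) < card V" using psubset_card_mono[OF fV] aX aV by blast
    have cyc1: "\<forall>x\<in>X. \<forall>y\<in>X. same_cycle (prod_transp s1) x y"
      using less.hyps[OF cX fX _ s1T] aX by blast
    have cyc2: "\<forall>x\<in>V - X. \<forall>y\<in>V - X. same_cycle (prod_transp s2) x y"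
      using less.hyps[OF cY _ _ s2T] fV MV MX by blast
    let ?s = "prod_transp u"
    let ?s1 = "prod_transp s1"
    let ?s2 = "prod_transp s2"
    let ?p = "prod_transp ts"
    have pdef: "?p x = ?s (Transposition.transpose a ?M x)" for x unfolding ts prod_append by simp
    have sX: "?s x = ?s1 x \<and> ?s1 x \<in> X" if "x \<in> X" for x
    proof -
      have h: "?s x = prod_transp (filter (\<lambda>e. fst e \<in> X) u) x" "?s x \<in> X"
        using prod_filter[OF clX that] by auto
      then show ?thesis unfolding s1d by simp
    qed
    have sY: "?s y = ?s2 y \<and> ?s2 y \<in> V - X" if "y \<in> V - X" for y
    proof -
      have "?s y = prod_transp (filter (\<lambda>e. fst e \<in> - X) u) y \<and> ?s y \<in> - X"
        using prod_filter[OF clY] that by blast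
      moreover have "filter (\<lambda>e. fst e \<in> - X) u = s2" unfolding s2d by simp
      moreover have "?s y \<in> V" using prod_inside[OF eiu] that by blast
      ultimately show ?thesis by auto
    qed
    have aM: "a \<noteq> ?M" using aX MX by blast
    have piM: "?p ?M = ?s1 a" using pdef[of ?M] sX[OF aX] by simp
    have MY: "?M \<in> V - X" using MV MX by blast
    have pia: "?p a = ?s2 ?M" using pdef[of a] sY[OF MY] by simp
    have piX: "?p x = ?s1 x" if "x \<in> X" "x \<noteq> a" for x
    proof -
      have "x \<noteq> ?M" using that MX by blast
      then show ?thesis using pdef[of x] sX[OF that(1)] that(2) by simp
    qed
    have piY: "?p y = ?s2 y" if "y \<in> V - X" "y \<noteq> ?M" for y
    proof -
      have "y \<noteq> a" using that aX by blast
      then show ?thesis using pdef[of y] sY[OF that(1)] that(2) by simp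
    qed
    have XO: "same_cycle ?p ?M x" if "x \<in> X" for x
    proof (rule orbit_lemma[where S = X and f = ?s1 and c = a and P = "same_cycle ?p ?M", OF _ _ aX _ _ that])
      show "\<And>x y. x \<in> X \<Longrightarrow> y \<in> X \<Longrightarrow> same_cycle ?s1 x y" using cyc1 by blast
      show "\<And>x. x \<in> X \<Longrightarrow> ?s1 x \<in> X" using sX by blast
      show "same_cycle ?p ?M (?s1 a)" using same_cycle_step[OF same_cycle_refl[of ?p ?M]] piM by simp
      fix x assume "x \<in> X" "x \<noteq> a" "same_cycle ?p ?M x"
      then show "same_cycle ?p ?M (?s1 x)" using same_cycle_step[of ?p ?M x] piX[of x] by simp
    qed
    have aO: "same_cycle ?p ?M a" using XO aX .
    have YO: "same_cycle ?p ?M y" if "y \<in> V - X" for y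
    proof (rule orbit_lemma[where S = "V - X" and f = ?s2 and c = ?M and P = "same_cycle ?p ?M", OF _ _ MY _ _ that])
      show "\<And>x y. x \<in> V - X \<Longrightarrow> y \<in> V - X \<Longrightarrow> same_cycle ?s2 x y" using cyc2 by blast
      show "\<And>x. x \<in> V - X \<Longrightarrow> ?s2 x \<in> V - X" using sY by blast
      show "same_cycle ?p ?M (?s2 ?M)" using same_cycle_step[OF aO] pia by simp
      fix x assume "x \<in> V - X" "x \<noteq> ?M" "same_cycle ?p ?M x"
      then show "same_cycle ?p ?M (?s2 x)" using same_cycle_step[of ?p ?M x] piY[of x] by simp
    qed
    have VO: "same_cycle ?p ?M x" if "x \<in> V" for x
      using XO YO that by blast
    show ?thesis using same_cycle_from[OF prod_perm] VO by blast
  qed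
qed

fun cat :: "nat \<Rightarrow> nat" where
  "cat 0 = 1"
| "cat (Suc n) = (\<Sum>i\<le>n. cat i * cat (n - i))"

lemma sum_Pow_card:
  assumes "finite A"
  shows "(\<Sum>X\<in>Pow A. g (card X)) = (\<Sum>j\<le>card A. (card A choose j) * g j)"
proof -
  have "(\<Sum>X\<in>Pow A. g (card X)) = (\<Sum>j\<le>card A. \<Sum>X\<in>{X. X \<in> Pow A \<and> card X = j}. g (card X))"
  proof (rule sum.group[symmetric])
    show "finite (Pow A)" using assms by simp
    show "finite {..card A}" by simp
    show "card ` Pow A \<subseteq> {..card A}" using assms by (auto intro: card_mono)
  qed
  also have "\<dots> = (\<Sum>j\<le>card A. (card A choose j) * g j)"
  proof (rule sum.cong[OF refl])
    fix j assume "j \<in> {..card A}"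
    have "(\<Sum>X\<in>{X. X \<in> Pow A \<and> card X = j}. g (card X)) = (\<Sum>X\<in>{X. X \<subseteq> A \<and> card X = j}. g j)"
      by (rule sum.cong) auto
    also have "\<dots> = card {X. X \<subseteq> A \<and> card X = j} * g j" by simp
    also have "\<dots> = (card A choose j) * g j" using n_subsets[OF assms] by simp
    finally show "(\<Sum>X\<in>{X. X \<in> Pow A \<and> card X = j}. g (card X)) = (card A choose j) * g j" .
  qed
  finally show ?thesis .
qed

lemma Tr_single: "Tr {v} = {[]}"
proof -
  have "[] \<in> Tr {v}" unfolding Tr_def conn_def by simp
  moreover have "ts = []" if "ts \<in> Tr {v}" for ts using that unfolding Tr_def by simp
  ultimately show ?thesis by blast
qed

lemma catalan_sum:
  "(\<Sum>j\<le>Suc m. (Suc m choose j) * (j * (fact (j - 1) * cat (j - 1)) *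
      (fact (Suc (Suc m) - j - 1) * cat (Suc (Suc m) - j - 1)))) = fact (Suc m) * cat (Suc m)"
proof -
  have "(\<Sum>j\<le>Suc m. (Suc m choose j) * (j * (fact (j - 1) * cat (j - 1)) *
      (fact (Suc (Suc m) - j - 1) * cat (Suc (Suc m) - j - 1))))
    = (\<Sum>i\<le>m. (Suc m choose Suc i) * (Suc i * (fact i * cat i) * (fact (m - i) * cat (m - i))))"
    by (subst sum.atMost_Suc_shift) simp
  also have "\<dots> = (\<Sum>i\<le>m. fact (Suc m) * (cat i * cat (m - i)))"
  proof (rule sum.cong[OF refl])
    fix i assume "i \<in> {..m}"
    then have im: "i \<le> m" by simp
    have f: "fact (Suc i) * fact (Suc m - Suc i) * (Suc m choose Suc i) = (fact (Suc m) :: nat)"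
      using binomial_fact_lemma[of "Suc i" "Suc m"] im by simp
    have "(Suc m choose Suc i) * (Suc i * (fact i * cat i) * (fact (m - i) * cat (m - i)))
       = (fact (Suc i) * fact (Suc m - Suc i) * (Suc m choose Suc i)) * (cat i * cat (m - i))"
      by (simp add: algebra_simps)
    also have "\<dots> = fact (Suc m) * (cat i * cat (m - i))" using f by simp
    finally show "(Suc m choose Suc i) * (Suc i * (fact i * cat i) * (fact (m - i) * cat (m - i)))
       = fact (Suc m) * (cat i * cat (m - i))" .
  qed
  also have "\<dots> = fact (Suc m) * cat (Suc m)" by (simp add: sum_distrib_left)
  finally show ?thesis .
qed

lemma card_Tr:
  "finite V \<Longrightarrow> V \<noteq> {} \<Longrightarrow> card (Tr V) = fact (card V - 1) * cat (card V - 1)"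
proof (induction "card V" arbitrary: V rule: less_induct)
  case less
  note fV = less.prems(1)
  show ?case
  proof (cases "card V \<ge> 2")
    case False
    moreover have "card V > 0" using less.prems(1,2) by (simp add: card_gt_0_iff)
    ultimately have "card V = 1" by linarith
    then obtain v where V: "V = {v}" using card_1_singletonE by blast
    show ?thesis unfolding V Tr_single by simp
  next
    case True
    let ?M = "Max V"
    let ?n = "card V"
    have MV: "?M \<in> V" using Max_in[OF fV less.prems(2)] .
    define g where "g j = j * (fact (j - 1) * cat (j - 1)) * (fact (?n - j - 1) * cat (?n - j - 1))" for j
    have "card (Tr V) = (\<Sum>X\<in>Pow (V - {?M}). card X * (card (Tr X) * card (Tr (V - X))))"
      by (rule card_Tr_rec[OF fV True])
    also have "\<dots> = (\<Sum>X\<in>Pow (V - {?M}). g (card X))"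
    proof (rule sum.cong[OF refl])
      fix X assume X: "X \<in> Pow (V - {?M})"
      show "card X * (card (Tr X) * card (Tr (V - X))) = g (card X)"
      proof (cases "X = {}")
        case True then show ?thesis unfolding g_def by simp
      next
        case False
        have XsV: "X \<subseteq> V" and MX: "?M \<notin> X" using X by auto
        have fX: "finite X" using XsV fV by (rule finite_subset)
        have cX: "card X < card V" using psubset_card_mono[OF fV] XsV MX MV by blast
        have cY: "card (V - X) < card V" using psubset_card_mono[OF fV] False XsV by blast
        have cVX: "card (V - X) = ?n - card X" using card_Diff_subset[OF fX XsV] .
        have Y0: "V - X \<noteq> {}" using MV MX by blast
        have "card (Tr X) = fact (card X - 1) * cat (card X - 1)"
          using less.hyps[OF cX fX False] .
        moreover have "card (Tr (V - X)) = fact (card (V - X) - 1) * cat (card (V - X) - 1)"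
          using less.hyps[OF cY _ Y0] fV by simp
        ultimately show ?thesis unfolding g_def cVX by (simp add: algebra_simps)
      qed
    qed
    also have "\<dots> = (\<Sum>j\<le>card (V - {?M}). (card (V - {?M}) choose j) * g j)"
      using sum_Pow_card[of "V - {?M}" g] fV by simp
    also have "card (V - {?M}) = ?n - 1" using MV fV by simp
    finally have eq: "card (Tr V) = (\<Sum>j\<le>?n - 1. (?n - 1 choose j) * g j)" .
    obtain m where m: "?n = Suc (Suc m)" using True by (metis add_2_eq_Suc le_iff_add)
    show ?thesis unfolding eq m g_def using catalan_sum[of m] by (simp add: m)
  qed
qed

lemma transitive_conn: "transitive_transp d ts = conn {..<d} ts"
  unfolding transitive_transp_def conn_def adj_def by simp

lemma data_unfold:
  assumes "mu > 0"
  shows "monotone_hurwitz_data 0 [mu] = {(ts, c). length ts = mu - 1 \<and> (\<forall>(a, b) \<in> set ts. a < b \<and> b < mu)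
        \<and> sorted (map snd ts) \<and> transitive_transp mu ts \<and> c \<in> {..<mu} \<rightarrow>\<^sub>E {..<1}
        \<and> (\<forall>x\<in>{..<mu}. \<forall>y\<in>{..<mu}. c x = c y \<longleftrightarrow> same_cycle (prod_transp ts) x y)
        \<and> (\<forall>i<1. card {x\<in>{..<mu}. c x = i} = [mu] ! i)}"
proof -
  have m: "2 * 0 + 1 + mu - 2 = mu - 1" using assms by simp
  have s: "sum_list [mu] = mu" "length [mu] = 1" by simp_all
  show ?thesis unfolding monotone_hurwitz_data_def Let_def s m ..
qed

lemma data_eq:
  assumes "mu > 0"
  shows "monotone_hurwitz_data 0 [mu] = (\<lambda>ts. (ts, restrict (\<lambda>_. 0) {..<mu})) ` Tr {..<mu}"
proof -
  let ?c = "restrict (\<lambda>_. 0::nat) {..<mu}"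
  show ?thesis unfolding data_unfold[OF assms]
  proof (rule set_eqI, rule iffI)
    fix z assume z: "z \<in> {(ts, c). length ts = mu - 1 \<and> (\<forall>(a, b) \<in> set ts. a < b \<and> b < mu)
        \<and> sorted (map snd ts) \<and> transitive_transp mu ts \<and> c \<in> {..<mu} \<rightarrow>\<^sub>E {..<1}
        \<and> (\<forall>x\<in>{..<mu}. \<forall>y\<in>{..<mu}. c x = c y \<longleftrightarrow> same_cycle (prod_transp ts) x y)
        \<and> (\<forall>i<1. card {x\<in>{..<mu}. c x = i} = [mu] ! i)}"
    obtain ts c where zd: "z = (ts, c)" by (cases z) blast
    from z[unfolded zd mem_Collect_eq case_prod_conv] have P: "length ts = mu - 1 \<and> (\<forall>(a, b) \<in> set ts. a < b \<and> b < mu)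
        \<and> sorted (map snd ts) \<and> transitive_transp mu ts \<and> c \<in> {..<mu} \<rightarrow>\<^sub>E {..<1}
        \<and> (\<forall>x\<in>{..<mu}. \<forall>y\<in>{..<mu}. c x = c y \<longleftrightarrow> same_cycle (prod_transp ts) x y)
        \<and> (\<forall>i<1. card {x\<in>{..<mu}. c x = i} = [mu] ! i)"
      .
    have h1: "length ts = mu - 1" using P by (rule conjunct1)
    have h2: "\<forall>(a, b) \<in> set ts. a < b \<and> b < mu" using P[THEN conjunct2] by (rule conjunct1)
    have h3: "sorted (map snd ts)" using P[THEN conjunct2, THEN conjunct2] by (rule conjunct1)
    have h4: "transitive_transp mu ts" using P[THEN conjunct2, THEN conjunct2, THEN conjunct2] by (rule conjunct1)
    have h5: "c \<in> {..<mu} \<rightarrow>\<^sub>E {..<1}"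
      using P[THEN conjunct2, THEN conjunct2, THEN conjunct2, THEN conjunct2] by (rule conjunct1)
    have "c = ?c"
    proof
      fix x show "c x = ?c x"
      proof (cases "x < mu")
        case True
        then have "c x \<in> {..<1}" using PiE_mem[OF h5] by simp
        then show ?thesis using True by simp
      next
        case False
        then have "c x = undefined" using PiE_arb[OF h5] by simp
        then show ?thesis using False by simp
      qed
    qed
    moreover have "ts \<in> Tr {..<mu}" unfolding Tr_def mem_Collect_eq
    proof (intro conjI)
      show "length ts = card {..<mu} - 1" using h1 by simp
      show "\<forall>(a, b)\<in>set ts. a < b \<and> a \<in> {..<mu} \<and> b \<in> {..<mu}" using h2 by auto
      show "sorted (map snd ts)" by (rule h3)
      show "conn {..<mu} ts" using h4 transitive_conn by simp
    qed
    ultimately show "z \<in> (\<lambda>ts. (ts, ?c)) ` Tr {..<mu}" unfolding zd by blast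
  next
    fix z assume "z \<in> (\<lambda>ts. (ts, ?c)) ` Tr {..<mu}"
    then obtain ts where zd: "z = (ts, ?c)" and tsT: "ts \<in> Tr {..<mu}" by blast
    have cyc: "\<forall>x\<in>{..<mu}. \<forall>y\<in>{..<mu}. same_cycle (prod_transp ts) x y"
      using Tr_cycle[OF _ _ tsT] assms by auto
    have t1: "length ts = mu - 1" using tsT unfolding Tr_def by simp
    have t2: "\<forall>(a, b) \<in> set ts. a < b \<and> b < mu" using tsT unfolding Tr_def by auto
    have t3: "sorted (map snd ts)" using tsT unfolding Tr_def by simp
    have t4: "transitive_transp mu ts" using tsT transitive_conn unfolding Tr_def by simp
    have t5: "?c \<in> {..<mu} \<rightarrow>\<^sub>E {..<1}" by simp
    have t6: "\<forall>x\<in>{..<mu}. \<forall>y\<in>{..<mu}. ?c x = ?c y \<longleftrightarrow> same_cycle (prod_transp ts) x y"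
      using cyc by simp
    have t7: "\<forall>i<1. card {x\<in>{..<mu}. ?c x = i} = [mu] ! i" by simp
    show "z \<in> {(ts, c). length ts = mu - 1 \<and> (\<forall>(a, b) \<in> set ts. a < b \<and> b < mu)
        \<and> sorted (map snd ts) \<and> transitive_transp mu ts \<and> c \<in> {..<mu} \<rightarrow>\<^sub>E {..<1}
        \<and> (\<forall>x\<in>{..<mu}. \<forall>y\<in>{..<mu}. c x = c y \<longleftrightarrow> same_cycle (prod_transp ts) x y)
        \<and> (\<forall>i<1. card {x\<in>{..<mu}. c x = i} = [mu] ! i)}"
      unfolding zd mem_Collect_eq case_prod_conv using t1 t2 t3 t4 t5 t6 t7 by (intro conjI)
  qed
qed

lemma hurwitz_cat:
  assumes "mu > 0"
  shows "monotone_hurwitz 0 [mu] = real (cat (mu - 1)) / real mu"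
proof -
  have "card (monotone_hurwitz_data 0 [mu]) = card (Tr {..<mu})"
    unfolding data_eq[OF assms] by (rule card_image) (auto simp: inj_on_def)
  also have "\<dots> = fact (mu - 1) * cat (mu - 1)" using card_Tr[of "{..<mu}"] assms by auto
  finally have c: "card (monotone_hurwitz_data 0 [mu]) = fact (mu - 1) * cat (mu - 1)" .
  have f: "(fact mu :: real) = real mu * fact (mu - 1)" using fact_reduce[of mu] assms by simp
  have "real (fact (mu - 1) * cat (mu - 1)) / fact (sum_list [mu])
      = (fact (mu - 1) * real (cat (mu - 1))) / (real mu * fact (mu - 1))" using f by simp
  also have "\<dots> = real (cat (mu - 1)) / real mu" by simp
  finally show ?thesis unfolding monotone_hurwitz_def c .
qed


definition zc :: "real fps" where "zc = Abs_fps (\<lambda>k. real (cat k))"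

lemma zc_eq: "fps_X * zc ^ 2 = zc - 1"
proof (rule fps_ext)
  fix n
  show "(fps_X * zc ^ 2) $ n = (zc - 1) $ n"
  proof (cases n)
    case 0 then show ?thesis by (simp add: zc_def)
  next
    case (Suc m)
    have "(fps_X * zc ^ 2) $ n = (zc * zc) $ m" using Suc by (simp add: power2_eq_square)
    also have "\<dots> = (\<Sum>i=0..m. real (cat i) * real (cat (m - i)))" by (simp add: fps_mult_nth zc_def)
    also have "\<dots> = real (cat (Suc m))" by (simp add: atLeast0AtMost)
    finally show ?thesis using Suc by (simp add: zc_def)
  qed
qed

lemma fps_uniq:
  fixes y z :: "real fps"
  assumes "y $ 0 = 1" "fps_X * y ^ 2 = y - 1" "z $ 0 = 1" "fps_X * z ^ 2 = z - 1"
  shows "y = z"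
proof -
  have coef: "f $ Suc n = (\<Sum>i=0..n. f $ i * f $ (n - i))" if "fps_X * f ^ 2 = f - 1" for f :: "real fps" and n
  proof -
    have "f $ Suc n = (f - 1) $ Suc n" by simp
    also have "\<dots> = (fps_X * f ^ 2) $ Suc n" using that by simp
    also have "\<dots> = (f * f) $ n" by (simp add: power2_eq_square)
    finally show ?thesis by (simp add: fps_mult_nth)
  qed
  have "\<forall>i\<le>n. y $ i = z $ i" for n
  proof (induction n)
    case 0 then show ?case using assms by simp
  next
    case (Suc n)
    have "y $ Suc n = z $ Suc n"
      unfolding coef[OF assms(2)] coef[OF assms(4)]
      by (rule sum.cong[OF refl]) (use Suc.IH in auto)
    then show ?case using Suc.IH le_Suc_eq by auto
  qed
  then show ?thesis by (intro fps_ext) blast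
qed

definition Bq :: "real fps" where "Bq = Abs_fps (\<lambda>n. ((1/2) gchoose n) * (-4) ^ n)"

lemma Bq_sq: "Bq * Bq = 1 - fps_const 4 * fps_X"
proof (rule fps_ext)
  fix n
  let ?B = "fps_binomial (1/2 :: real)"
  have BB: "?B * ?B = 1 + fps_X"
    using fps_binomial_add_mult[of "1/2" "1/2 :: real", symmetric] fps_binomial_of_nat[of 1] by simp
  have "(Bq * Bq) $ n = (\<Sum>i=0..n. ((1/2) gchoose i) * (-4) ^ i * (((1/2) gchoose (n - i)) * (-4) ^ (n - i)))"
    by (simp add: fps_mult_nth Bq_def)
  also have "\<dots> = (\<Sum>i=0..n. (-4) ^ n * (((1/2) gchoose i) * ((1/2) gchoose (n - i))))"
  proof (rule sum.cong[OF refl])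
    fix i assume "i \<in> {0..n}"
    then have "(-4::real) ^ i * (-4) ^ (n - i) = (-4) ^ n" by (simp add: power_add[symmetric])
    then show "((1/2) gchoose i) * (-4) ^ i * (((1/2) gchoose (n - i)) * (-4) ^ (n - i))
        = (-4) ^ n * (((1/2) gchoose i) * ((1/2::real) gchoose (n - i)))"
      by (simp only: mult_ac)
  qed
  also have "\<dots> = (-4) ^ n * (?B * ?B) $ n" by (simp add: fps_mult_nth sum_distrib_left)
  also have "\<dots> = (1 - fps_const 4 * fps_X) $ n" unfolding BB
    by (cases "n = 1") (auto simp: fps_X_nth)
  finally show "(Bq * Bq) $ n = (1 - fps_const 4 * fps_X) $ n" .
qed

definition wq :: "real fps" where "wq = Abs_fps (\<lambda>k. - (1/2) * Bq $ Suc k)"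

lemma wq_X: "fps_const 2 * (fps_X * wq) = 1 - Bq"
proof (rule fps_ext)
  fix n show "(fps_const 2 * (fps_X * wq)) $ n = (1 - Bq) $ n"
    by (cases n) (simp_all add: wq_def Bq_def)
qed

lemma wq_eq: "fps_X * wq ^ 2 = wq - 1"
proof -
  let ?c = "fps_const (4 :: real) * fps_X"
  have c22: "fps_const (4::real) = fps_const 2 * fps_const 2" by (simp add: fps_const_mult)
  have c2: "fps_const (2::real) = 2" by (simp add: numeral_fps_const)
  have "?c * (fps_X * wq ^ 2) = ?c * (wq - 1)"
    using wq_X Bq_sq c22 c2 by algebra
  moreover have "?c \<noteq> 0" by simp
  ultimately show ?thesis by simp
qed

lemma wq_zc: "wq = zc"
proof (rule fps_uniq[OF _ wq_eq _ zc_eq])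
  show "wq $ 0 = 1" by (simp add: wq_def Bq_def)
  show "zc $ 0 = 1" by (simp add: zc_def)
qed

lemma cat_gchoose: "real (cat k) = - (1/2) * (((1/2) gchoose Suc k) * (-4) ^ Suc k)"
proof -
  have "real (cat k) = zc $ k" by (simp add: zc_def)
  also have "\<dots> = wq $ k" by (simp add: wq_zc)
  finally show ?thesis by (simp add: wq_def Bq_def)
qed


lemma cat_rec: "real (cat (Suc k)) * (real k + 2) = (4 * real k + 2) * real (cat k)"
proof -
  let ?g = "\<lambda>n. (1/2::real) gchoose n"
  have h1: "real (cat k) = - (1/2) * (?g (Suc k) * (-4) ^ Suc k)" by (rule cat_gchoose)
  have h2: "real (cat (Suc k)) = - (1/2) * (?g (Suc (Suc k)) * (-4) ^ Suc (Suc k))" by (rule cat_gchoose)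
  have h3: "(1/2) * ?g (Suc k) = real (Suc k) * ?g (Suc k) + real (Suc (Suc k)) * ?g (Suc (Suc k))"
    using gbinomial_mult_1[of "1/2::real" "Suc k"] by simp
  have h4: "(-4::real) ^ Suc (Suc k) = -4 * (-4) ^ Suc k" by simp
  have h5: "real (Suc k) = real k + 1" "real (Suc (Suc k)) = real k + 2" by simp_all
  let ?G1 = "?g (Suc k)" and ?G2 = "?g (Suc (Suc k))" and ?P = "(-4::real) ^ Suc k"
  have a: "real (cat (Suc k)) = 2 * (?G2 * ?P)" using h2 h4 by simp
  have b0: "(real k + 2) * ?G2 = 1/2 * ?G1 - (real k + 1) * ?G1" using h3 unfolding h5 by linarith
  have b: "(real k + 2) * ?G2 = (- real k - 1/2) * ?G1" using b0 by (simp add: algebra_simps)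
  have "real (cat (Suc k)) * (real k + 2) = 2 * ?P * ((real k + 2) * ?G2)" unfolding a by (simp only: mult_ac)
  also have "\<dots> = 2 * ?P * ((- real k - 1/2) * ?G1)" unfolding b ..
  also have "\<dots> = (4 * real k + 2) * (- (1/2) * (?G1 * ?P))" by (simp add: algebra_simps)
  also have "\<dots> = (4 * real k + 2) * real (cat k)" unfolding h1 ..
  finally show ?thesis .
qed

lemma cat_fact_mult: "real (cat k) * (fact k * fact (Suc k)) = fact (2 * k)"
proof (induction k)
  case 0
  show ?case by simp
next
  case (Suc k)
  have e: "2 * Suc k = Suc (Suc (2 * k))" by simp
  have f2: "fact (2 * Suc k) = (real (2 * k) + 2) * (real (2 * k) + 1) * (fact (2 * k) :: real)"
    unfolding e by (simp add: algebra_simps)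
  have f1: "fact (Suc k) = (real k + 1) * (fact k :: real)" by simp
  have f3: "fact (Suc (Suc k)) = (real k + 2) * (fact (Suc k) :: real)" by simp
  have r: "real (2 * k) = 2 * real k" by simp
  show ?case using cat_rec[of k] Suc.IH f1 f2 f3 r by algebra
qed

lemma hurwitz_closed:
  assumes "mu > 0"
  shows "monotone_hurwitz 0 [mu] = real ((2 * mu) choose mu) / (2 * real mu * (2 * real mu - 1))"
proof -
  obtain k where k: "mu = Suc k" using assms by (metis gr0_implies_Suc)
  let ?C = "real ((2 * Suc k) choose Suc k)"
  have b0: "fact (Suc k) * fact (2 * Suc k - Suc k) * ((2 * Suc k) choose Suc k) = (fact (2 * Suc k) :: nat)"
    by (rule binomial_fact_lemma) simp
  have b: "?C * (fact (Suc k) * fact (Suc k)) = fact (2 * Suc k)"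
  proof -
    have "2 * Suc k - Suc k = Suc k" by simp
    then have "real (fact (Suc k) * fact (Suc k) * ((2 * Suc k) choose Suc k)) = real (fact (2 * Suc k))"
      using b0 by simp
    then show ?thesis by (simp add: algebra_simps)
  qed
  have e: "2 * Suc k = Suc (Suc (2 * k))" by simp
  have f2: "fact (2 * Suc k) = (real (2 * k) + 2) * (real (2 * k) + 1) * (fact (2 * k) :: real)"
    unfolding e by (simp add: algebra_simps)
  have f1: "fact (Suc k) = (real k + 1) * (fact k :: real)" by simp
  have r: "real (2 * k) = 2 * real k" by simp
  have cf: "real (cat k) * (fact k * fact (Suc k)) = fact (2 * k)" by (rule cat_fact_mult)
  have "(?C - 2 * (2 * real k + 1) * real (cat k)) * (fact (Suc k) * fact (Suc k)) = 0"
    using b f1 f2 r cf by algebra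
  moreover have "(fact (Suc k) * fact (Suc k) :: real) \<noteq> 0" by simp
  ultimately have C: "?C = 2 * (2 * real k + 1) * real (cat k)" by simp
  have "monotone_hurwitz 0 [mu] = real (cat k) / real (Suc k)" using hurwitz_cat[OF assms] k by simp
  also have "\<dots> = ?C / (2 * real (Suc k) * (2 * real (Suc k) - 1))"
  proof -
    have d: "2 * real (Suc k) * (2 * real (Suc k) - 1) = (2 * (2 * real k + 1)) * real (Suc k)"
      by (simp add: algebra_simps)
    have nz: "2 * (2 * real k + 1) \<noteq> 0" by simp
    show ?thesis unfolding d C by (rule nonzero_mult_divide_mult_cancel_left[OF nz, symmetric])
  qed
  finally show ?thesis unfolding k .
qed

lemma deriv_F01: "fps_deriv F01 = zc"
proof (rule fps_ext)
  fix n
  have "fps_deriv F01 $ n = real (n + 1) * monotone_hurwitz 0 [n + 1]" by (simp add: F01_def)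
  also have "\<dots> = real (cat n)" using hurwitz_cat[of "n + 1"] by simp
  finally show "fps_deriv F01 $ n = zc $ n" by (simp add: zc_def)
qed

lemma series_sum:
  fixes x :: real
  assumes "x \<noteq> 0" "\<bar>x\<bar> < 1/4"
  shows "(\<lambda>k. fps_nth (fps_deriv F01) k * x ^ k) sums ((1 - sqrt (1 - 4 * x)) / (2 * x))"
proof -
  let ?f = "\<lambda>n. ((1/2::real) gchoose n) * (-4 * x) ^ n"
  have "\<bar>-4 * x\<bar> < 1" using assms(2) by simp
  then have "?f sums sqrt (1 + -4 * x)" by (rule sqrt_series)
  then have "?f sums ((sqrt (1 + -4 * x) - ?f 0) + ?f 0)" by (simp only: diff_add_cancel)
  then have "(\<lambda>n. ?f (Suc n)) sums (sqrt (1 + -4 * x) - ?f 0)" by (rule sums_Suc_iff[THEN iffD2])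
  then have "(\<lambda>n. (- 1 / (2 * x)) * ?f (Suc n)) sums ((- 1 / (2 * x)) * (sqrt (1 + -4 * x) - ?f 0))"
    by (rule sums_mult)
  moreover have "(\<lambda>n. (- 1 / (2 * x)) * ?f (Suc n)) = (\<lambda>k. fps_nth (fps_deriv F01) k * x ^ k)"
  proof
    fix k
    have "fps_nth (fps_deriv F01) k = - (1/2) * (((1/2) gchoose Suc k) * (-4) ^ Suc k)"
      unfolding deriv_F01 using cat_gchoose[of k] by (simp add: zc_def)
    moreover have "(-4 * x) ^ Suc k = (-4) ^ Suc k * (x * x ^ k)" by (simp only: power_mult_distrib power_Suc[of x])
    ultimately show "(- 1 / (2 * x)) * ?f (Suc k) = fps_nth (fps_deriv F01) k * x ^ k"
      using assms(1) by (simp add: field_simps)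
  qed
  moreover have "(- 1 / (2 * x)) * (sqrt (1 + -4 * x) - ?f 0) = (1 - sqrt (1 - 4 * x)) / (2 * x)"
    using assms(1) by (simp add: field_simps)
  ultimately show ?thesis by simp
qed

theorem lemma2p5:
  shows "(\<forall>mu::nat. mu > 0 \<longrightarrow>
            monotone_hurwitz 0 [mu]
              = real ((2 * mu) choose mu) / (2 * real mu * (2 * real mu - 1)))
       \<and> (\<exists>!z :: real fps. fps_nth z 0 = 1 \<and> fps_X * z ^ 2 = z - 1)
       \<and> (\<forall>z :: real fps. fps_nth z 0 = 1 \<and> fps_X * z ^ 2 = z - 1 \<longrightarrow> fps_deriv F01 = z)
       \<and> (\<forall>x::real. x \<noteq> 0 \<and> \<bar>x\<bar> < 1/4 \<longrightarrow>
            (\<lambda>k. fps_nth (fps_deriv F01) k * x ^ k) sums ((1 - sqrt (1 - 4 * x)) / (2 * x)))"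
proof (intro conjI allI impI)
  fix mu :: nat assume "mu > 0"
  then show "monotone_hurwitz 0 [mu] = real ((2 * mu) choose mu) / (2 * real mu * (2 * real mu - 1))"
    by (rule hurwitz_closed)
next
  have z0: "fps_nth zc 0 = 1" by (simp add: zc_def)
  show "\<exists>!z :: real fps. fps_nth z 0 = 1 \<and> fps_X * z ^ 2 = z - 1"
  proof (rule ex1I[of _ zc])
    show "fps_nth zc 0 = 1 \<and> fps_X * zc ^ 2 = zc - 1" using z0 zc_eq by simp
    fix y :: "real fps" assume "fps_nth y 0 = 1 \<and> fps_X * y ^ 2 = y - 1"
    then show "y = zc" using fps_uniq[OF _ _ z0 zc_eq] by blast
  qed
next
  fix z :: "real fps" assume "fps_nth z 0 = 1 \<and> fps_X * z ^ 2 = z - 1"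
  then have "zc = z" using fps_uniq[OF _ zc_eq] by (simp add: zc_def)
  then show "fps_deriv F01 = z" using deriv_F01 by simp
next
  fix x :: real assume "x \<noteq> 0 \<and> \<bar>x\<bar> < 1/4"
  then show "(\<lambda>k. fps_nth (fps_deriv F01) k * x ^ k) sums ((1 - sqrt (1 - 4 * x)) / (2 * x))"
    using series_sum by blast
qed

end
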